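(* Let $S$ be a numerical semigroup with a unique Betti element. Then $S$ is telescopic and $\mathrm{Ap}(S)$ is $\alpha$-rectangular. Moreover, the converses fail: $S=\langle 4,6,13\rangle$ is associated to a plane branch (hence telescopic with $\alpha$-rectangular Apéry set) but does not have a unique Betti element.
   Context: A numerical semigroup is a submonoid $S$ of $(\mathbb N,+)$ with finite complement in $\mathbb N$; $g_1<\dots<g_\nu$ is its minimal system of generators, $m=g_1$, and $\mathrm{Ap}(S)=\{s\in S: s-m\notin S\}$. For $i=2,\dots,\nu$: $\tau_i=\min\{h\in\mathbb N: hg_i\in\langle g_1,\dots,g_{i-1}\rangle\}-1$ and $\alpha_i=\max\{h\in\mathbb N: hg_i\in\mathrm{Ap}(S)\}$. $S$ is telescopic if $\mathrm{Ap}(S)=\{\sum_{i=2}^\nu\lambda_ig_i: 0\le\lambda_i\le\tau_i\}$; $S$ is associated to a plane branch if it is telescopic and $(\tau_i+1)g_i<g_{i+1}$ for all $i=2,\dots,\nu-1$; $\mathrm{Ap}(S)$ is $\alpha$-rectangular if $\mathrm{Ap}(S)=\{\sum_{i=2}^\nu\lambda_ig_i: 0\le\lambda_i\le\alpha_i\}$. $S$ has a unique Betti element if (equivalently) there exist pairwise coprime integers $a_1,\dots,a_\nu>1$ with $g_i=\prod_{j\ne i}a_j$ for all $i$. *)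

theory Defs
  imports Main
begin

definition numerical_semigroup :: "nat set \<Rightarrow> bool" where
  "numerical_semigroup S \<longleftrightarrow> 0 \<in> S \<and> (\<forall>x\<in>S. \<forall>y\<in>S. x + y \<in> S) \<and> finite (UNIV - S)"

definition generated :: "nat set \<Rightarrow> nat set" where
  "generated A = {x. \<exists>c :: nat \<Rightarrow> nat. x = (\<Sum>a\<in>A. c a * a)}"

definition mingens :: "nat set \<Rightarrow> nat set" where
  "mingens S = {s \<in> S. s \<noteq> 0 \<and> \<not> (\<exists>x\<in>S. \<exists>y\<in>S. x \<noteq> 0 \<and> y \<noteq> 0 \<and> s = x + y)}"

definition emb_dim :: "nat set \<Rightarrow> nat" where
  "emb_dim S = card (mingens S)"

text \<open>gen S i = g_i for i = 1..nu, where g_1 < ... < g_nu.\<close>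
definition gen :: "nat set \<Rightarrow> nat \<Rightarrow> nat" where
  "gen S i = sorted_list_of_set (mingens S) ! (i - 1)"

definition multiplicity :: "nat set \<Rightarrow> nat" where
  "multiplicity S = gen S 1"

text \<open>Apery set w.r.t. the multiplicity: s in S with s - m not in S (as an integer).\<close>
definition apery :: "nat set \<Rightarrow> nat set" where
  "apery S = {s \<in> S. s < multiplicity S \<or> s - multiplicity S \<notin> S}"

definition monoid_first :: "nat set \<Rightarrow> nat \<Rightarrow> nat set" where
  "monoid_first S k = {(\<Sum>j=1..k. c j * gen S j) | c :: nat \<Rightarrow> nat. True}"

definition tau :: "nat set \<Rightarrow> nat \<Rightarrow> nat" where
  "tau S i = (LEAST h. h > 0 \<and> h * gen S i \<in> monoid_first S (i - 1)) - 1"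

definition alpha :: "nat set \<Rightarrow> nat \<Rightarrow> nat" where
  "alpha S i = Max {h. h * gen S i \<in> apery S}"

definition telescopic :: "nat set \<Rightarrow> bool" where
  "telescopic S \<longleftrightarrow> apery S =
     {(\<Sum>i=2..emb_dim S. c i * gen S i) | c :: nat \<Rightarrow> nat. \<forall>i\<in>{2..emb_dim S}. c i \<le> tau S i}"

definition alpha_rectangular :: "nat set \<Rightarrow> bool" where
  "alpha_rectangular S \<longleftrightarrow> apery S =
     {(\<Sum>i=2..emb_dim S. c i * gen S i) | c :: nat \<Rightarrow> nat. \<forall>i\<in>{2..emb_dim S}. c i \<le> alpha S i}"

definition plane_branch :: "nat set \<Rightarrow> bool" where
  "plane_branch S \<longleftrightarrow> telescopic S \<and>
     (\<forall>i\<in>{2..<emb_dim S}. (tau S i + 1) * gen S i < gen S (i + 1))"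

definition unique_betti :: "nat set \<Rightarrow> bool" where
  "unique_betti S \<longleftrightarrow> (\<exists>a :: nat \<Rightarrow> nat.
     (\<forall>i\<in>{1..emb_dim S}. a i > 1) \<and>
     (\<forall>i\<in>{1..emb_dim S}. \<forall>j\<in>{1..emb_dim S}. i \<noteq> j \<longrightarrow> coprime (a i) (a j)) \<and>
     (\<forall>i\<in>{1..emb_dim S}. gen S i = (\<Prod>j\<in>{1..emb_dim S} - {i}. a j)))"

end

theory Submission imports Defs "HOL-Number_Theory.Cong" begin

lemma ns_mult: "numerical_semigroup S \<Longrightarrow> x \<in> S \<Longrightarrow> k * x \<in> S"
  by (induction k) (auto simp: numerical_semigroup_def)

lemma ns_sum:
  assumes ns: "numerical_semigroup S" and "finite A" and "\<forall>i\<in>A. g i \<in> S"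
  shows "(\<Sum>i\<in>A. c i * g i) \<in> S"
  using assms(2,3)
proof (induction A rule: finite_induct)
  case empty then show ?case using ns by (simp add: numerical_semigroup_def)
next
  case (insert x F)
  then show ?case using ns ns_mult[OF ns, of "g x" "c x"] by (simp add: numerical_semigroup_def)
qed

lemma sum_delta_mult: "finite A \<Longrightarrow> i \<in> A \<Longrightarrow> (\<Sum>j\<in>A. (if j = i then h else 0) * g j) = h * (g i::nat)"
proof -
  assume "finite A" "i \<in> A"
  have "(\<Sum>j\<in>A. (if j = i then h else 0) * g j) = (\<Sum>j\<in>A. if j = i then h * g j else 0)"
    by (rule sum.cong) auto
  also have "\<dots> = h * g i" using \<open>finite A\<close> \<open>i \<in> A\<close> by (simp add: sum.delta)
  finally show ?thesis .
qed

lemma mingens_finite: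
  assumes ns: "numerical_semigroup S" shows "finite (mingens S)"
proof -
  have "finite (UNIV - S)" using ns by (simp add: numerical_semigroup_def)
  then obtain B where B: "\<forall>x\<in>UNIV - S. x \<le> B" by (metis finite_nat_set_iff_bounded_le)
  have big: "x > B \<Longrightarrow> x \<in> S" for x using B by (meson DiffI UNIV_I not_le)
  have "mingens S \<subseteq> {..B + 1 + B}"
  proof
    fix s assume s: "s \<in> mingens S"
    show "s \<in> {..B + 1 + B}"
    proof (rule ccontr)
      assume "s \<notin> {..B + 1 + B}"
      then have "s > B + 1 + B" by simp
      then have "B + 1 \<in> S" "s - (B+1) \<in> S" "s = (B+1) + (s - (B+1))" "s - (B+1) \<noteq> 0"
        using big by auto
      moreover have "\<not> (\<exists>x\<in>S. \<exists>y\<in>S. x \<noteq> 0 \<and> y \<noteq> 0 \<and> s = x + y)"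
        using s by (simp add: mingens_def)
      ultimately show False by (metis add_is_0 one_neq_zero)
    qed
  qed
  then show ?thesis using finite_subset by blast
qed

lemma gen_mem:
  assumes ns: "numerical_semigroup S" and i: "i \<in> {1..emb_dim S}"
  shows "gen S i \<in> mingens S"
proof -
  have f: "finite (mingens S)" using mingens_finite[OF ns] .
  have "i - 1 < length (sorted_list_of_set (mingens S))" using i f by (auto simp: emb_dim_def)
  then have "sorted_list_of_set (mingens S) ! (i - 1) \<in> set (sorted_list_of_set (mingens S))"
    by (rule nth_mem)
  then show ?thesis unfolding gen_def using f by simp
qed

lemma mem_gen:
  assumes ns: "numerical_semigroup S" and s: "s \<in> mingens S"
  shows "\<exists>i\<in>{1..emb_dim S}. gen S i = s"
proof -
  have f: "finite (mingens S)" using mingens_finite[OF ns] .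
  then have "s \<in> set (sorted_list_of_set (mingens S))" using s by simp
  then obtain k where k: "k < length (sorted_list_of_set (mingens S))" "sorted_list_of_set (mingens S) ! k = s"
    by (metis in_set_conv_nth)
  then have "k + 1 \<in> {1..emb_dim S}" using f by (auto simp: emb_dim_def)
  moreover have "gen S (k+1) = s" using k by (simp add: gen_def)
  ultimately show ?thesis by blast
qed

lemma generation:
  assumes ns: "numerical_semigroup S"
  shows "s \<in> S \<Longrightarrow> \<exists>c. s = (\<Sum>i=1..emb_dim S. c i * gen S i)"
proof (induction s rule: less_induct)
  case (less s)
  show ?case
  proof (cases "s = 0")
    case True then show ?thesis by (intro exI[of _ "\<lambda>_. 0"]) simp
  next
    case nz: False
    show ?thesis
    proof (cases "s \<in> mingens S")
      case True
      then obtain i where i: "i \<in> {1..emb_dim S}" "gen S i = s" using mem_gen[OF ns] by blast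
      have "(\<Sum>j=1..emb_dim S. (if j = i then 1 else 0) * gen S j) = 1 * gen S i"
        by (rule sum_delta_mult) (use i in auto)
      then show ?thesis using i(2) by (intro exI[of _ "\<lambda>j. if j = i then 1 else 0"]) simp
    next
      case False
      then obtain x y where xy: "x \<in> S" "y \<in> S" "x \<noteq> 0" "y \<noteq> 0" "s = x + y"
        using less.prems nz unfolding mingens_def by blast
      have lt: "x < s" "y < s" using xy by auto
      obtain cx where cx: "x = (\<Sum>i=1..emb_dim S. cx i * gen S i)" using less.IH[OF lt(1) xy(1)] by blast
      obtain cy where cy: "y = (\<Sum>i=1..emb_dim S. cy i * gen S i)" using less.IH[OF lt(2) xy(2)] by blast
      show ?thesis
        by (rule exI[of _ "\<lambda>i. cx i + cy i"]) (simp add: xy(5) cx cy add_mult_distrib sum.distrib)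
    qed
  qed
qed

lemma emb_pos:
  assumes ns: "numerical_semigroup S" shows "emb_dim S \<ge> 1"
proof (rule ccontr)
  assume "\<not> emb_dim S \<ge> 1"
  then have "emb_dim S = 0" by simp
  then have "S \<subseteq> {0}" using generation[OF ns] by fastforce
  then have "UNIV \<subseteq> (UNIV - S) \<union> {0}" by blast
  moreover have "finite (UNIV - S)" using ns by (simp add: numerical_semigroup_def)
  ultimately have "finite (UNIV :: nat set)" using finite_subset by blast
  then show False by simp
qed


lemma ub_main:
  assumes ns: "numerical_semigroup S"
    and a1: "\<forall>i\<in>{1..emb_dim S}. a i > (1::nat)"
    and a2: "\<forall>i\<in>{1..emb_dim S}. \<forall>j\<in>{1..emb_dim S}. i \<noteq> j \<longrightarrow> coprime (a i) (a j)"
    and a3: "\<forall>i\<in>{1..emb_dim S}. gen S i = (\<Prod>j\<in>{1..emb_dim S} - {i}. a j)"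
  shows "apery S = {(\<Sum>i=2..emb_dim S. c i * gen S i) | c :: nat \<Rightarrow> nat. \<forall>i\<in>{2..emb_dim S}. c i \<le> a i - 1}
     \<and> (\<forall>i\<in>{2..emb_dim S}. tau S i = a i - 1 \<and> alpha S i = a i - 1)"
proof -
  define n where "n = emb_dim S"
  define g where "g = gen S"
  define P where "P = (\<Prod>j\<in>{1..n}. a j)"
  have n1: "n \<ge> 1" using emb_pos[OF ns] n_def by simp
  have apos: "a i > 1" if "i \<in> {1..n}" for i using a1 that unfolding n_def by blast
  have ap2: "a i > 1" if "i \<in> {2..n}" for i using apos[of i] that by auto
  have a11: "a 1 > 1" using apos[of 1] n1 by auto
  have gS: "g i \<in> S" if "i \<in> {1..n}" for i
    using gen_mem[OF ns] that unfolding g_def n_def mingens_def by blast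
  have F1: "a i * g i = P" if "i \<in> {1..n}" for i
    using a3 that unfolding g_def n_def P_def by (metis finite_atLeastAtMost prod.remove)
  have F2: "a k dvd g i" if "i \<in> {1..n}" "k \<in> {1..n}" "i \<noteq> k" for i k
    using a3 that unfolding g_def n_def by (metis DiffI dvd_prodI finite_Diff finite_atLeastAtMost singletonD)
  have F3: "coprime (g i) (a i)" if "i \<in> {1..n}" for i
    using a3 a2 that unfolding g_def n_def by (metis DiffE insertCI prod_coprime_left)
  have g1: "g 1 > 0"
  proof -
    have "g 1 = (\<Prod>j\<in>{1..n}-{1}. a j)" using a3 n1 by (simp add: g_def n_def)
    also have "\<dots> > 0" by (rule prod_pos) (use apos in force)
    finally show ?thesis .
  qed
  have m: "Defs.multiplicity S = g 1" by (simp add: Defs.multiplicity_def g_def)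
  have sumS: "(\<Sum>i\<in>A. c i * g i) \<in> S" if "A \<subseteq> {1..n}" for A c
    by (rule ns_sum[OF ns]) (use that gS finite_subset in auto)
  have split1: "(\<Sum>i=1..n. f i) = f 1 + (\<Sum>i=2..n. f i)" for f :: "nat \<Rightarrow> nat"
    using n1 by (simp add: sum.atLeast_Suc_atMost numeral_2_eq_2)
  have D: "\<exists>d. s = d 1 * g 1 + (\<Sum>i=2..n. d i * g i) \<and> (\<forall>i\<in>{2..n}. d i < a i)" if sS: "s \<in> S" for s
  proof -
    obtain c where c: "s = (\<Sum>i=1..n. c i * g i)" using generation[OF ns sS] n_def g_def by auto
    have eq: "c i * g i = (c i div a i) * (a 1 * g 1) + (c i mod a i) * g i" if "i \<in> {2..n}" for i
    proof -
      have "a i * g i = a 1 * g 1" using F1 that n1 by auto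
      moreover have "c i * g i = (c i div a i * a i + c i mod a i) * g i" by simp
      ultimately show ?thesis by (metis add_mult_distrib mult.assoc)
    qed
    define d where "d i = (if i = 1 then c 1 + (\<Sum>j=2..n. c j div a j) * a 1 else c i mod a i)" for i
    have "(\<Sum>i=2..n. c i * g i) = (\<Sum>i=2..n. (c i div a i) * (a 1 * g 1) + (c i mod a i) * g i)"
      using eq by (rule sum.cong[OF refl])
    also have "\<dots> = (\<Sum>j=2..n. c j div a j) * (a 1 * g 1) + (\<Sum>i=2..n. d i * g i)"
      by (simp add: sum.distrib sum_distrib_right d_def)
    finally have "s = d 1 * g 1 + (\<Sum>i=2..n. d i * g i)"
      using c split1 by (simp add: d_def algebra_simps)
    moreover have "\<forall>i\<in>{2..n}. d i < a i"
    proof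
      fix i assume i: "i \<in> {2..n}"
      then have "a i > 0" using ap2[OF i] by auto
      then show "d i < a i" using i by (simp add: d_def)
    qed
    ultimately show ?thesis by blast
  qed
  have U: "c k = d k"
    if c: "\<forall>i\<in>{2..n}. c i < a i" and d: "\<forall>i\<in>{2..n}. d i < a i"
      and md: "(\<Sum>i=2..n. c i * g i) mod g 1 = (\<Sum>i=2..n. d i * g i) mod g 1"
      and k: "k \<in> {2..n}" for c d k
  proof -
    have k1: "k \<in> {1..n}" "k \<noteq> 1" using k by auto
    have dk: "a k dvd g 1" using F2[of 1 k] k1 n1 by auto
    have rest: "a k dvd (\<Sum>i\<in>{2..n}-{k}. e i * g i)" for e
      by (rule dvd_sum) (use F2 k1 in auto)
    have spl: "(\<Sum>i=2..n. e i * g i) = e k * g k + (\<Sum>i\<in>{2..n}-{k}. e i * g i)" for e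
      using k by (simp add: sum.remove)
    have "[(\<Sum>i=2..n. c i * g i) = (\<Sum>i=2..n. d i * g i)] (mod a k)"
      using md dk cong_dvd_modulus_nat unfolding cong_def by blast
    then have "[c k * g k + (\<Sum>i\<in>{2..n}-{k}. c i * g i) = d k * g k + (\<Sum>i\<in>{2..n}-{k}. d i * g i)] (mod a k)"
      by (simp add: spl)
    moreover have "[(\<Sum>i\<in>{2..n}-{k}. c i * g i) = 0] (mod a k)" "[(\<Sum>i\<in>{2..n}-{k}. d i * g i) = 0] (mod a k)"
      using rest by (auto simp: cong_0_iff)
    ultimately have m0: "[c k * g k + (\<Sum>i\<in>{2..n}-{k}. c i * g i) = d k * g k + (\<Sum>i\<in>{2..n}-{k}. d i * g i)] (mod a k)"
      and u1: "[(\<Sum>i\<in>{2..n}-{k}. c i * g i) = 0] (mod a k)" and u2: "[(\<Sum>i\<in>{2..n}-{k}. d i * g i) = 0] (mod a k)"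
      by auto
    have h1: "[c k * g k + (\<Sum>i\<in>{2..n}-{k}. c i * g i) = c k * g k] (mod a k)"
      using cong_add[OF cong_refl[of "c k * g k"] u1] by simp
    have h2: "[d k * g k + (\<Sum>i\<in>{2..n}-{k}. d i * g i) = d k * g k] (mod a k)"
      using cong_add[OF cong_refl[of "d k * g k"] u2] by simp
    have "[c k * g k = d k * g k] (mod a k)"
      using cong_trans[OF cong_sym[OF h1] cong_trans[OF m0 h2]] .
    then have "[c k = d k] (mod a k)" using cong_mult_rcancel_nat F3[OF k1(1)] by blast
    then show ?thesis using c d k by (simp add: cong_def)
  qed
  define R where "R = {(\<Sum>i=2..n. c i * g i) | c :: nat \<Rightarrow> nat. \<forall>i\<in>{2..n}. c i \<le> a i - 1}"
  have le_iff: "(c i \<le> a i - 1) = (c i < a i)" if "i \<in> {2..n}" for c i using ap2[OF that] by auto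
  have ApR: "apery S = R"
  proof
    show "apery S \<subseteq> R"
    proof
      fix s assume s: "s \<in> apery S"
      then have sS: "s \<in> S" and nap: "s < g 1 \<or> s - g 1 \<notin> S" by (auto simp: apery_def m)
      obtain d where d: "s = d 1 * g 1 + (\<Sum>i=2..n. d i * g i)" "\<forall>i\<in>{2..n}. d i < a i" using D[OF sS] by blast
      have "d 1 = 0"
      proof (rule ccontr)
        assume "d 1 \<noteq> 0"
        then obtain e where e: "d 1 = Suc e" using not0_implies_Suc by blast
        then have "s = g 1 + (e * g 1 + (\<Sum>i=2..n. d i * g i))" using d(1) by simp
        then have "s \<ge> g 1" "s - g 1 = (d 1 - 1) * g 1 + (\<Sum>i=2..n. d i * g i)"
          using e by auto
        moreover have "(d 1 - 1) * g 1 + (\<Sum>i=2..n. d i * g i) \<in> S"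
        proof -
          have "(\<Sum>i=2..n. d i * g i) \<in> S" using sumS[of "{2..n}" d] by auto
          moreover have "(d 1 - 1) * g 1 \<in> S" using ns_mult[OF ns gS[of 1]] n1 by auto
          ultimately show ?thesis using ns by (simp add: numerical_semigroup_def)
        qed
        ultimately show False using nap by auto
      qed
      then show "s \<in> R" using d le_iff unfolding R_def by auto
    qed
  next
    show "R \<subseteq> apery S"
    proof
      fix r assume "r \<in> R"
      then obtain c where c: "r = (\<Sum>i=2..n. c i * g i)" "\<forall>i\<in>{2..n}. c i < a i"
        unfolding R_def using le_iff by auto
      have rS: "r \<in> S" using c sumS[of "{2..n}" c] by auto
      have "\<not> (\<not> r < g 1 \<and> r - g 1 \<in> S)"
      proof
        assume h: "\<not> r < g 1 \<and> r - g 1 \<in> S"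
        obtain d where d: "r - g 1 = d 1 * g 1 + (\<Sum>i=2..n. d i * g i)" "\<forall>i\<in>{2..n}. d i < a i"
          using D h by blast
        have r2: "r = (d 1 + 1) * g 1 + (\<Sum>i=2..n. d i * g i)"
        proof -
          have "r = g 1 + (r - g 1)" using h by simp
          also have "\<dots> = g 1 + (d 1 * g 1 + (\<Sum>i=2..n. d i * g i))" using d(1) by simp
          finally show ?thesis by simp
        qed
        then have "(\<Sum>i=2..n. c i * g i) mod g 1 = (\<Sum>i=2..n. d i * g i) mod g 1"
          using c(1) by (metis mod_mult_self3)
        then have "\<forall>k\<in>{2..n}. c k = d k" using U c(2) d(2) by blast
        then have "r = (\<Sum>i=2..n. d i * g i)" using c(1) by simp
        then show False using r2 g1 by simp
      qed
      then show "r \<in> apery S" using rS by (auto simp: apery_def m)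
    qed
  qed
  have tau: "tau S i = a i - 1" if i: "i \<in> {2..n}" for i
  proof -
    have i1: "i \<in> {1..n}" "i \<noteq> 1" using i by auto
    have "(LEAST h. h > 0 \<and> h * g i \<in> monoid_first S (i - 1)) = a i"
    proof (rule Least_equality)
      have eqs: "(\<Sum>j=1..i-1. (if j = 1 then a 1 else 0) * gen S j) = a 1 * gen S 1"
        by (rule sum_delta_mult) (use i in auto)
      have "a 1 * g 1 \<in> monoid_first S (i - 1)"
        unfolding monoid_first_def g_def
        by (rule CollectI, rule exI[of _ "\<lambda>j. if j = 1 then a 1 else 0"]) (simp only: eqs)
      then show "a i > 0 \<and> a i * g i \<in> monoid_first S (i - 1)"
        using F1[OF i1(1)] F1[of 1] n1 apos[OF i1(1)] by auto
    next
      fix y assume y: "y > 0 \<and> y * g i \<in> monoid_first S (i - 1)"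
      then obtain c where c: "y * g i = (\<Sum>j=1..i-1. c j * g j)"
        unfolding monoid_first_def g_def by auto
      have "a i dvd (\<Sum>j=1..i-1. c j * g j)"
        by (rule dvd_sum) (use F2 i in auto)
      then have "a i dvd y * g i" using c by simp
      then have "a i dvd y" using F3[OF i1(1)] by (metis coprime_commute coprime_dvd_mult_left_iff)
      then show "a i \<le> y" using y by (simp add: dvd_imp_le)
    qed
    then show ?thesis by (simp add: tau_def g_def)
  qed
  have alpha: "alpha S i = a i - 1" if i: "i \<in> {2..n}" for i
  proof -
    have i1: "i \<in> {1..n}" "i \<noteq> 1" using i by auto
    have "{h. h * g i \<in> apery S} = {..a i - 1}"
    proof (intro set_eqI iffI)
      fix h assume h: "h \<in> {h. h * g i \<in> apery S}"
      show "h \<in> {..a i - 1}"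
      proof (rule ccontr)
        assume "h \<notin> {..a i - 1}"
        then have ha: "h \<ge> a i" by auto
        have eq: "h * g i = a 1 * g 1 + (h - a i) * g i"
          using F1[OF i1(1)] F1[of 1] n1 mult_le_mono1[OF ha, of "g i"] by (simp add: diff_mult_distrib)
        have ge: "h * g i \<ge> g 1" using eq a11 by (metis le_add1 le_trans mult_le_mono1 nat_mult_1 less_imp_le)
        have "h * g i - g 1 = (a 1 - 1) * g 1 + (h - a i) * g i"
          using eq a11 by (simp add: diff_mult_distrib)
        moreover have "(a 1 - 1) * g 1 + (h - a i) * g i \<in> S"
          using ns ns_mult[OF ns gS[of 1]] ns_mult[OF ns gS[OF i1(1)]] n1 by (auto simp: numerical_semigroup_def)
        ultimately show False using h ge by (auto simp: apery_def m)
      qed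
    next
      fix h assume hh: "h \<in> {..a i - 1}"
      have eqs: "(\<Sum>j=2..n. (if j = i then h else 0) * g j) = h * g i"
        by (rule sum_delta_mult) (use i in auto)
      have bnd: "\<forall>j\<in>{2..n}. (if j = i then h else 0) \<le> a j - 1" using hh by auto
      have "h * g i \<in> R" unfolding R_def
        by (rule CollectI, rule exI[of _ "\<lambda>j. if j = i then h else 0"]) (intro conjI, simp only: eqs, fact bnd)
      then show "h \<in> {h. h * g i \<in> apery S}" using ApR by simp
    qed
    moreover have "Max {..a i - 1} = a i - 1" by (rule Max_eqI) auto
    ultimately show ?thesis by (simp add: alpha_def g_def)
  qed
  show ?thesis using ApR tau alpha unfolding R_def n_def g_def by blast
qed


lemma part1: "numerical_semigroup S \<and> unique_betti S \<longrightarrow> telescopic S \<and> alpha_rectangular S"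
proof
  assume h: "numerical_semigroup S \<and> unique_betti S"
  then obtain a where a: "\<forall>i\<in>{1..emb_dim S}. a i > (1::nat)"
    "\<forall>i\<in>{1..emb_dim S}. \<forall>j\<in>{1..emb_dim S}. i \<noteq> j \<longrightarrow> coprime (a i) (a j)"
    "\<forall>i\<in>{1..emb_dim S}. gen S i = (\<Prod>j\<in>{1..emb_dim S} - {i}. a j)"
    unfolding unique_betti_def by blast
  note M = ub_main[OF conjunct1[OF h] a]
  have t: "{(\<Sum>i=2..emb_dim S. c i * gen S i) | c :: nat \<Rightarrow> nat. \<forall>i\<in>{2..emb_dim S}. c i \<le> f i}
     = {(\<Sum>i=2..emb_dim S. c i * gen S i) | c :: nat \<Rightarrow> nat. \<forall>i\<in>{2..emb_dim S}. c i \<le> a i - 1}"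
    if "\<forall>i\<in>{2..emb_dim S}. f i = a i - 1" for f
    using that by auto
  show "telescopic S \<and> alpha_rectangular S"
    unfolding telescopic_def alpha_rectangular_def using M t[of "tau S"] t[of "alpha S"] by auto
qed


definition gaps :: "nat set" where "gaps = {1,2,3,5,7,9,11,15}"

lemma gaps_simp: "x \<in> gaps \<longleftrightarrow> x = 1 \<or> x = 2 \<or> x = 3 \<or> x = 5 \<or> x = 7 \<or> x = 9 \<or> x = 11 \<or> x = 15"
  by (simp add: gaps_def)

lemma even_rep: "even (y::nat) \<Longrightarrow> y \<noteq> 2 \<Longrightarrow> \<exists>p q. y = 4*p + 6*q"
proof -
  assume e: "even y" and y2: "y \<noteq> 2"
  show ?thesis
  proof (cases "y mod 4 = 0")
    case True
    then have "y = 4 * (y div 4) + 6 * 0" by presburger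
    then show ?thesis by blast
  next
    case False
    then have "y mod 4 = 2" using e by presburger
    then have "y = 4 * ((y - 6) div 4) + 6 * 1" using y2 by presburger
    then show ?thesis by blast
  qed
qed

lemma gen_char: "generated {4, 6, 13} = UNIV - gaps"
proof -
  have "generated {4, 6, 13} = {x. \<exists>p q r. x = 4*p + 6*q + 13*r}"
    unfolding generated_def
  proof (intro set_eqI iffI)
    fix x :: nat assume "x \<in> {x. \<exists>c. x = (\<Sum>a\<in>{4, 6, 13}. c a * a)}"
    then obtain c where "x = (\<Sum>a\<in>{4::nat, 6, 13}. c a * a)" by auto
    then have "x = 4 * c 4 + 6 * c 6 + 13 * c 13" by simp
    then show "x \<in> {x. \<exists>p q r. x = 4*p + 6*q + 13*r}" by blast
  next
    fix x :: nat assume "x \<in> {x. \<exists>p q r. x = 4*p + 6*q + 13*r}"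
    then obtain p q r where "x = 4*p + 6*q + 13*r" by auto
    then have e: "x = (\<Sum>a\<in>{4::nat, 6, 13}. (\<lambda>k::nat. if k = 4 then p else if k = 6 then q else r) a * a)" by simp
    show "x \<in> {x. \<exists>c. x = (\<Sum>a\<in>{4, 6, 13}. c a * a)}" by (rule CollectI, rule exI, rule e)
  qed
  also have "\<dots> = UNIV - gaps"
  proof (intro set_eqI iffI)
    fix x :: nat assume "x \<in> {x. \<exists>p q r. x = 4*p + 6*q + 13*r}"
    then obtain p q r where x: "x = 4*p + 6*q + 13*r" by auto
    have "x \<notin> gaps"
    proof (cases "r \<ge> 2")
      case True then have "x \<ge> 26" using x by linarith
      then show ?thesis unfolding gaps_simp by linarith
    next
      case False
      then have "r = 0 \<or> r = 1" by linarith
      then show ?thesis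
      proof
        assume "r = 0"
        then have "x = 2 * (2*p + 3*q)" using x by simp
        moreover have "2*p + 3*q \<noteq> 1" by presburger
        ultimately show ?thesis unfolding gaps_simp by presburger
      next
        assume "r = 1"
        then have "x = 13 + 2 * (2*p + 3*q)" using x by simp
        moreover have "2*p + 3*q \<noteq> 1" by presburger
        ultimately show ?thesis unfolding gaps_simp by presburger
      qed
    qed
    then show "x \<in> UNIV - gaps" by simp
  next
    fix x :: nat assume "x \<in> UNIV - gaps"
    then have "x \<notin> gaps" by simp
    show "x \<in> {x. \<exists>p q r. x = 4*p + 6*q + 13*r}"
    proof (cases "even x")
      case True
      moreover have "x \<noteq> 2" using \<open>x \<notin> gaps\<close> by (simp add: gaps_def)
      ultimately obtain p q where "x = 4*p + 6*q" using even_rep by blast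
      then have "x = 4*p + 6*q + 13*0" by simp
      then show ?thesis by blast
    next
      case False
      then have "x \<ge> 13" "x \<noteq> 15" using \<open>x \<notin> gaps\<close> unfolding gaps_simp by presburger+
      then have "even (x - 13)" "x - 13 \<noteq> 2" using False by presburger+
      then obtain p q where "x - 13 = 4*p + 6*q" using even_rep by blast
      then have "x = 4*p + 6*q + 13*1" using \<open>x \<ge> 13\<close> by simp
      then show ?thesis by blast
    qed
  qed
  finally show ?thesis .
qed

abbreviation "T \<equiv> generated {4, 6, 13}"

lemma memT: "x \<in> T \<longleftrightarrow> x \<notin> gaps" by (simp add: gen_char)


lemma nsT: "numerical_semigroup T"
proof -
  have "0 \<in> T" by (simp add: memT gaps_def)
  moreover have "\<forall>x\<in>T. \<forall>y\<in>T. x + y \<in> T"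
  proof (intro ballI)
    fix x y assume "x \<in> T" "y \<in> T"
    then have "x \<notin> gaps" "y \<notin> gaps" by (simp_all add: memT)
    then show "x + y \<in> T" unfolding memT gaps_def by simp presburger
  qed
  moreover have "UNIV - T = gaps" by (auto simp: memT)
  then have "finite (UNIV - T)" by (simp add: gaps_def)
  ultimately show ?thesis by (simp add: numerical_semigroup_def)
qed


lemma minT: "mingens T = {4, 6, 13}"
proof (intro set_eqI iffI)
  fix s assume s: "s \<in> mingens T"
  then have sT: "s \<notin> gaps" "s \<noteq> 0" and nd: "\<not> (\<exists>x\<in>T. \<exists>y\<in>T. x \<noteq> 0 \<and> y \<noteq> 0 \<and> s = x + y)"
    unfolding mingens_def by (auto simp: memT)
  show "s \<in> {4, 6, 13}"
  proof (rule ccontr)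
    assume ns: "s \<notin> {4, 6, 13}"
    show False
    proof (cases "s = 19")
      case True
      have "(6::nat) \<in> T" "(13::nat) \<in> T" by (simp_all add: memT gaps_def)
      then have "\<not> (6 \<noteq> (0::nat) \<and> 13 \<noteq> (0::nat) \<and> s = 6 + 13)" using nd by blast
      then show False using True by simp
    next
      case False
      have "s \<noteq> 4" "s \<noteq> 6" "s \<noteq> 13" using ns by auto
      then have "s - 4 \<notin> gaps" "s - 4 \<noteq> 0" "s = 4 + (s - 4)"
        using sT False unfolding gaps_simp by presburger+
      moreover have "(4::nat) \<in> T" by (simp add: memT gaps_def)
      ultimately have "s - 4 \<in> T" "4 \<in> T" "s - 4 \<noteq> 0" "s = 4 + (s - 4)" by (simp_all add: memT)
      then show False using nd by (metis zero_neq_numeral)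
    qed
  qed
next
  fix s assume s: "s \<in> {4::nat, 6, 13}"
  have nd: "\<not> (\<exists>x\<in>T. \<exists>y\<in>T. x \<noteq> 0 \<and> y \<noteq> 0 \<and> s = x + y)"
  proof
    assume "\<exists>x\<in>T. \<exists>y\<in>T. x \<noteq> 0 \<and> y \<noteq> 0 \<and> s = x + y"
    then obtain x y where xy: "x \<notin> gaps" "y \<notin> gaps" "x \<noteq> 0" "y \<noteq> 0" "s = x + y" by (auto simp: memT)
    have x4: "x \<ge> 4" "y \<ge> 4" using xy(1-4) unfolding gaps_simp by presburger+
    then have "s = 13" using s xy(5) by auto
    then have "x \<in> {4..9}" using xy(5) x4 by auto
    then have "x = 4 \<or> x = 5 \<or> x = 6 \<or> x = 7 \<or> x = 8 \<or> x = 9" by auto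
    then show False using xy \<open>s = 13\<close> unfolding gaps_simp by auto
  qed
  moreover have "s \<in> T" "s \<noteq> 0" using s by (auto simp: memT gaps_def)
  ultimately show "s \<in> mingens T" unfolding mingens_def by blast
qed

lemma sl: "sorted_list_of_set {4::nat, 6, 13} = [4, 6, 13]" by simp

lemma genT: "gen T 1 = 4" "gen T 2 = 6" "gen T 3 = 13" "emb_dim T = 3"
  "gen T (Suc 0) = 4" "gen T (Suc (Suc 0)) = 6" "gen T (Suc (Suc (Suc 0))) = 13"
  by (simp_all add: gen_def minT emb_dim_def sl)

lemma multT: "Defs.multiplicity T = 4" by (simp add: Defs.multiplicity_def genT)

lemma apT: "apery T = {0, 6, 13, 19}"
proof (intro set_eqI iffI)
  fix s assume "s \<in> apery T"
  then have h: "s \<notin> gaps" "s < 4 \<or> s - 4 \<in> gaps" by (auto simp: apery_def multT memT)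
  have "s = 0 \<or> s = 1 \<or> s = 2 \<or> s = 3 \<or> s = 5 \<or> s = 6 \<or> s = 7 \<or> s = 9 \<or> s = 11 \<or> s = 13 \<or> s = 15 \<or> s = 19"
    using h(2) unfolding gaps_simp by presburger
  then show "s \<in> {0, 6, 13, 19}" using h(1) unfolding gaps_simp by auto
next
  fix s :: nat assume "s \<in> {0, 6, 13, 19}"
  then have "s \<notin> gaps" "s < 4 \<or> s - 4 \<in> gaps" unfolding gaps_simp by auto
  then show "s \<in> apery T" by (auto simp: apery_def multT memT)
qed

lemma mf1: "monoid_first T 1 = {x. \<exists>p. x = 4 * p}"
proof (intro set_eqI iffI)
  fix x assume "x \<in> monoid_first T 1"
  then obtain c where "x = (\<Sum>j = 1..1. c j * gen T j)" unfolding monoid_first_def by auto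
  then have "x = 4 * c 1" by (simp add: genT)
  then show "x \<in> {x. \<exists>p. x = 4 * p}" by blast
next
  fix x :: nat assume "x \<in> {x. \<exists>p. x = 4 * p}"
  then obtain p where "x = 4 * p" by auto
  then have e: "x = (\<Sum>j = 1..1. (\<lambda>j. p) j * gen T j)" by (simp add: genT)
  show "x \<in> monoid_first T 1" unfolding monoid_first_def by (rule CollectI, rule exI, rule conjI[OF e TrueI])
qed

lemma mf2: "monoid_first T 2 = {x. \<exists>p q. x = 4 * p + 6 * q}"
proof (intro set_eqI iffI)
  fix x assume "x \<in> monoid_first T 2"
  then obtain c where "x = (\<Sum>j = 1..2. c j * gen T j)" unfolding monoid_first_def by auto
  then have "x = 4 * c 1 + 6 * c 2" by (simp add: genT numeral_2_eq_2)
  then show "x \<in> {x. \<exists>p q. x = 4 * p + 6 * q}" by blast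
next
  fix x :: nat assume "x \<in> {x. \<exists>p q. x = 4 * p + 6 * q}"
  then obtain p q where "x = 4 * p + 6 * q" by auto
  then have e: "x = (\<Sum>j = 1..2. (\<lambda>j. if j = 1 then p else q) j * gen T j)"
    by (simp add: genT numeral_2_eq_2)
  show "x \<in> monoid_first T 2" unfolding monoid_first_def by (rule CollectI, rule exI, rule conjI[OF e TrueI])
qed

lemma diff_2_1: "(2::nat) - 1 = 1" by simp
lemma diff_3_1: "(3::nat) - 1 = 2" by simp

lemma tauT2: "tau T 2 = 1"
proof -
  have "(LEAST h. h > 0 \<and> h * gen T 2 \<in> monoid_first T (2 - 1)) = 2"
  proof (rule Least_equality)
    have "2 * gen T 2 = 4 * 3" by (simp add: genT)
    then show "0 < (2::nat) \<and> 2 * gen T 2 \<in> monoid_first T (2 - 1)" unfolding diff_2_1 mf1 by auto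
  next
    fix y assume "0 < y \<and> y * gen T 2 \<in> monoid_first T (2 - 1)"
    then obtain p where "y > 0" "y * 6 = 4 * p" unfolding diff_2_1 mf1 genT by auto
    then show "2 \<le> y" by presburger
  qed
  then show ?thesis by (simp add: tau_def)
qed

lemma tauT3: "tau T 3 = 1"
proof -
  have "(LEAST h. h > 0 \<and> h * gen T 3 \<in> monoid_first T (3 - 1)) = 2"
  proof (rule Least_equality)
    have "2 * gen T 3 = 4 * 5 + 6 * 1" by (simp add: genT)
    then show "0 < (2::nat) \<and> 2 * gen T 3 \<in> monoid_first T (3 - 1)" unfolding diff_3_1 mf2 by fastforce
  next
    fix y assume "0 < y \<and> y * gen T 3 \<in> monoid_first T (3 - 1)"
    then obtain p q where "y > 0" "y * 13 = 4 * p + 6 * q" unfolding diff_3_1 mf2 genT by auto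
    then show "2 \<le> y" by presburger
  qed
  then show ?thesis by (simp add: tau_def)
qed

lemma alphaT2: "alpha T 2 = 1"
proof -
  have "{h. h * gen T 2 \<in> apery T} = {0, 1}"
  proof (intro set_eqI iffI)
    fix h assume "h \<in> {h. h * gen T 2 \<in> apery T}"
    then have "h * 6 = 0 \<or> h * 6 = 6 \<or> h * 6 = 13 \<or> h * 6 = 19" by (simp add: genT apT)
    then have "h = 0 \<or> h = 1" by presburger
    then show "h \<in> {0, 1}" by auto
  qed (auto simp: genT apT)
  then show ?thesis by (simp add: alpha_def)
qed

lemma alphaT3: "alpha T 3 = 1"
proof -
  have "{h. h * gen T 3 \<in> apery T} = {0, 1}"
  proof (intro set_eqI iffI)
    fix h assume "h \<in> {h. h * gen T 3 \<in> apery T}"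
    then have "h * 13 = 0 \<or> h * 13 = 6 \<or> h * 13 = 13 \<or> h * 13 = 19" by (simp add: genT apT)
    then have "h = 0 \<or> h = 1" by presburger
    then show "h \<in> {0, 1}" by auto
  qed (auto simp: genT apT)
  then show ?thesis by (simp add: alpha_def)
qed

lemma idx3: "{2..3::nat} = {2, 3}" by auto
lemma idx: "{2..emb_dim T} = {2, 3}" by (simp add: genT idx3)

lemma boxT: "{(\<Sum>i=2..emb_dim T. c i * gen T i) | c :: nat \<Rightarrow> nat. \<forall>i\<in>{2..emb_dim T}. c i \<le> 1} = {0, 6, 13, 19}"
proof -
  have s: "(\<Sum>i=2..emb_dim T. c i * gen T i) = c 2 * 6 + c 3 * 13" for c
    by (simp add: genT idx3)
  have b: "(\<forall>i\<in>{2..emb_dim T}. c i \<le> 1) \<longleftrightarrow> c 2 \<le> 1 \<and> c 3 \<le> 1" for c :: "nat \<Rightarrow> nat"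
    by (simp add: idx)
  show ?thesis
  proof (intro set_eqI iffI)
    fix x assume "x \<in> {(\<Sum>i=2..emb_dim T. c i * gen T i) | c :: nat \<Rightarrow> nat. \<forall>i\<in>{2..emb_dim T}. c i \<le> 1}"
    then obtain c :: "nat \<Rightarrow> nat" where "x = c 2 * 6 + c 3 * 13" "c 2 \<le> 1" "c 3 \<le> 1" using s b by auto
    then show "x \<in> {0, 6, 13, 19}" by (auto simp: le_Suc_eq)
  next
    fix x assume x: "x \<in> {0::nat, 6, 13, 19}"
    have w: "\<exists>c :: nat \<Rightarrow> nat. x = c 2 * 6 + c 3 * 13 \<and> c 2 \<le> 1 \<and> c 3 \<le> 1"
    proof -
      consider "x = 0" | "x = 6" | "x = 13" | "x = 19" using x by auto
      then show ?thesis
      proof cases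
        case 1 then show ?thesis by (intro exI[of _ "\<lambda>_. 0"]) simp
      next
        case 2 then show ?thesis by (intro exI[of _ "\<lambda>i. if i = 2 then 1 else 0"]) simp
      next
        case 3 then show ?thesis by (intro exI[of _ "\<lambda>i. if i = 3 then 1 else 0"]) simp
      next
        case 4 then show ?thesis by (intro exI[of _ "\<lambda>i. 1"]) simp
      qed
    qed
    then show "x \<in> {(\<Sum>i=2..emb_dim T. c i * gen T i) | c :: nat \<Rightarrow> nat. \<forall>i\<in>{2..emb_dim T}. c i \<le> 1}"
      unfolding s b by blast
  qed
qed

lemma cond_eq: "(\<forall>i\<in>{2..emb_dim T}. c i \<le> f i) \<longleftrightarrow> (\<forall>i\<in>{2..emb_dim T}. c i \<le> 1)"
  if "f 2 = 1" "f 3 = 1" for c f :: "nat \<Rightarrow> nat"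
  using that by (simp add: idx)

lemma telT: "telescopic T"
  unfolding telescopic_def using cond_eq[of "tau T", OF tauT2 tauT3] boxT apT by simp

lemma alT: "alpha_rectangular T"
  unfolding alpha_rectangular_def using cond_eq[of "alpha T", OF alphaT2 alphaT3] boxT apT by simp

lemma pbT: "plane_branch T"
proof -
  have "{2..<emb_dim T} = {2}" by (auto simp: genT)
  then show ?thesis unfolding plane_branch_def using telT tauT2 by (simp add: genT)
qed

lemma nubT: "\<not> unique_betti T"
proof
  assume "unique_betti T"
  then obtain a where a: "\<forall>i\<in>{1..3}. a i > (1::nat)" "\<forall>i\<in>{1..3}. gen T i = (\<Prod>j\<in>{1..3} - {i}. a j)"
    unfolding unique_betti_def genT by blast
  have st: "{1..3::nat} - {3} = {1, 2}" by auto
  have "(13::nat) = gen T 3" by (simp add: genT)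
  also have "\<dots> = (\<Prod>j\<in>{1..3} - {3}. a j)" using a(2) by simp
  also have "\<dots> = a 1 * a 2" unfolding st by simp
  finally have e: "a 1 * a 2 = 13" by simp
  have a12: "a 1 \<ge> 2" "a 2 \<ge> 2" using bspec[OF a(1), of 1] bspec[OF a(1), of 2] by auto
  have "2 * a 2 \<le> a 1 * a 2" using mult_le_mono1[OF a12(1)] .
  then have "a 2 \<le> 6" using e by linarith
  then have "a 2 = 2 \<or> a 2 = 3 \<or> a 2 = 4 \<or> a 2 = 5 \<or> a 2 = 6" using a12 by linarith
  then show False using e by (elim disjE) (simp; presburger)+
qed

theorem mainTheorem5:
  shows "(\<forall>S :: nat set. numerical_semigroup S \<and> unique_betti S \<longrightarrow>
            telescopic S \<and> alpha_rectangular S) \<and>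
         (numerical_semigroup (generated {4, 6, 13}) \<and>
          plane_branch (generated {4, 6, 13}) \<and>
          telescopic (generated {4, 6, 13}) \<and>
          alpha_rectangular (generated {4, 6, 13}) \<and>
          \<not> unique_betti (generated {4, 6, 13}))"
  using part1 nsT pbT telT alT nubT by blast

end
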